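(* Let $\mathcal{A}$ be an $[n_1,k_1,d_1]$ linear code over $\mathbb{F}_q$ (the inner code) and $\mathcal{B}$ an $[n_2,k_2,d_2]$ linear code over $\mathbb{F}_{q^{k_1}}$ (the outer code). Let $\mathcal{C}$ be the serially concatenated code of length $n=n_1n_2$ and dimension $k=k_1k_2$ over $\mathbb{F}_q$, obtained by encoding a message with $\mathcal{B}$ and then encoding each of the $n_2$ outer code symbols (viewed as a vector in $\mathbb{F}_q^{k_1}$ via a fixed $\mathbb{F}_q$-linear identification) with $\mathcal{A}$. Then the minimum distance $d$ of $\mathcal{C}$ satisfies $$d\;\le\; n_1n_2-k_1k_2+1-\left(\left\lceil \frac{k_1k_2}{n_1-d_1+1}\right\rceil-1\right)(d_1-1).$$ *)

theory Defs
  imports Complex_Main "HOL-Library.Function_Algebras"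
begin

text \<open>Words of length n over a field are functions nat => 'a vanishing from index n on.
  The vector-space structure is pointwise (addition from Function_Algebras).\<close>

definition svec :: "'a::field \<Rightarrow> (nat \<Rightarrow> 'a) \<Rightarrow> (nat \<Rightarrow> 'a)" where
  "svec c w = (\<lambda>i. c * w i)"

definition words :: "nat \<Rightarrow> (nat \<Rightarrow> 'a::zero) set" where
  "words n = {w. \<forall>i\<ge>n. w i = 0}"

definition hdist :: "(nat \<Rightarrow> 'a) \<Rightarrow> (nat \<Rightarrow> 'a) \<Rightarrow> nat" where
  "hdist x y = card {i. x i \<noteq> y i}"

definition min_dist :: "(nat \<Rightarrow> 'a) set \<Rightarrow> nat" where
  "min_dist C = Min {hdist x y | x y. x \<in> C \<and> y \<in> C \<and> x \<noteq> y}"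

definition linear_code :: "nat \<Rightarrow> nat \<Rightarrow> nat \<Rightarrow> (nat \<Rightarrow> 'a::field) set \<Rightarrow> bool" where
  "linear_code n k d C \<longleftrightarrow>
     C \<subseteq> words n \<and> module.subspace svec C \<and> vector_space.dim svec C = k \<and> min_dist C = d"

definition field_embedding :: "('a::field \<Rightarrow> 'b::field) \<Rightarrow> bool" where
  "field_embedding e \<longleftrightarrow> e 0 = 0 \<and> e 1 = 1 \<and> (\<forall>x y. e (x + y) = e x + e y) \<and> (\<forall>x y. e (x * y) = e x * e y)"

text \<open>Serially concatenated code: outer codeword b (length n2 over 'b), each symbol b j mapped
  to F_q^k1 by phi and encoded by the inner encoder enc; block j occupies positions
  j*n1 .. j*n1+n1-1.\<close>
definition concat_code ::
  "nat \<Rightarrow> nat \<Rightarrow> ((nat \<Rightarrow> 'a::zero) \<Rightarrow> (nat \<Rightarrow> 'a)) \<Rightarrow> ('b \<Rightarrow> (nat \<Rightarrow> 'a)) \<Rightarrow> (nat \<Rightarrow> 'b) set \<Rightarrow> (nat \<Rightarrow> 'a) set" where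
  "concat_code n1 n2 enc phi B =
     (\<lambda>b. (\<lambda>t. if t < n1 * n2 then enc (phi (b (t div n1))) (t mod n1) else 0)) ` B"

end

theory Submission
  imports Defs "HOL-Library.FuncSet"
begin

interpretation VS: vector_space "svec :: 'a::field \<Rightarrow> (nat \<Rightarrow> 'a) \<Rightarrow> (nat \<Rightarrow> 'a)"
  by unfold_locales (auto simp: svec_def fun_eq_iff algebra_simps)

definition supp_set :: "nat set \<Rightarrow> (nat \<Rightarrow> 'a::zero) set" where
  "supp_set T = {w. \<forall>i. i \<notin> T \<longrightarrow> w i = 0}"

lemma card_supp_set:
  assumes "finite T"
  shows "finite (supp_set T :: (nat \<Rightarrow> 'a::{finite,zero}) set)
    \<and> card (supp_set T :: (nat \<Rightarrow> 'a) set) = card (UNIV::'a set) ^ card T"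
proof -
  have b: "bij_betw (\<lambda>w. restrict w T) (supp_set T :: (nat \<Rightarrow> 'a) set) (PiE T (\<lambda>_. UNIV))"
    by (rule bij_betw_byWitness[where f' = "\<lambda>u i. if i \<in> T then u i else 0"])
       (auto simp: supp_set_def fun_eq_iff PiE_iff extensional_def)
  have "finite (PiE T (\<lambda>_. UNIV :: 'a set))" using assms by (simp add: finite_PiE)
  moreover have "card (PiE T (\<lambda>_. UNIV :: 'a set)) = card (UNIV::'a set) ^ card T"
    by (simp add: card_PiE assms)
  ultimately show ?thesis using b bij_betw_finite bij_betw_same_card by metis
qed

lemma words_supp: "words n = supp_set {..<n}"
  by (auto simp: words_def supp_set_def)

lemma pigeon:
  assumes "finite S" "f ` S \<subseteq> R" "finite R" "card R < card S"
  shows "\<exists>x\<in>S. \<exists>y\<in>S. x \<noteq> y \<and> f x = f y"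
proof (rule ccontr)
  assume "\<not> ?thesis"
  then have "inj_on f S" by (auto simp: inj_on_def)
  then have "card S = card (f ` S)" by (simp add: card_image)
  also have "\<dots> \<le> card R" using assms by (simp add: card_mono)
  finally show False using assms by simp
qed

lemma hdist_le:
  assumes "x \<in> words N" "y \<in> words N"
  shows "hdist x y \<le> N"
proof -
  have "{i. x i \<noteq> y i} \<subseteq> {..<N}" proof
    fix i assume "i \<in> {i. x i \<noteq> y i}"
    then show "i \<in> {..<N}" using assms unfolding words_def by (metis (mono_tags) lessThan_iff mem_Collect_eq not_le)
  qed
  then show ?thesis unfolding hdist_def by (metis card_lessThan card_mono finite_lessThan)
qed

lemma min_dist_le:
  assumes "C \<subseteq> words N" "x \<in> C" "y \<in> C" "x \<noteq> y"
  shows "min_dist C \<le> hdist x y"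
proof -
  have "{hdist x y | x y. x \<in> C \<and> y \<in> C \<and> x \<noteq> y} \<subseteq> {..N}"
    using assms hdist_le by blast
  then have "finite {hdist x y | x y. x \<in> C \<and> y \<in> C \<and> x \<noteq> y}"
    using finite_subset by blast
  then show ?thesis unfolding min_dist_def using assms by (intro Min_le) auto
qed

lemma hdist_pos:
  assumes "x \<in> words N" "y \<in> words N" "x \<noteq> y"
  shows "hdist x y \<ge> 1"
proof -
  obtain i where i: "x i \<noteq> y i" using assms(3) by (auto simp: fun_eq_iff)
  have sub: "{i. x i \<noteq> y i} \<subseteq> {..<N}"
  proof
    fix i assume "i \<in> {i. x i \<noteq> y i}"
    then show "i \<in> {..<N}" using assms unfolding words_def by (metis (mono_tags) lessThan_iff mem_Collect_eq not_le)
  qed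
  have fin: "finite {i. x i \<noteq> y i}" using finite_subset[OF sub] by simp
  have "{i. x i \<noteq> y i} \<noteq> {}" using i by blast
  then have "card {i. x i \<noteq> y i} > 0" using fin by (simp add: card_gt_0_iff)
  then show ?thesis unfolding hdist_def by simp
qed

lemma min_dist_ge1:
  assumes "C \<subseteq> words N" "x \<in> C" "y \<in> C" "x \<noteq> y"
  shows "min_dist C \<ge> 1"
proof -
  let ?S = "{hdist x y | x y. x \<in> C \<and> y \<in> C \<and> x \<noteq> y}"
  have "?S \<subseteq> {..N}" using assms hdist_le by blast
  then have fin: "finite ?S" using finite_subset by blast
  have ne: "?S \<noteq> {}" using assms by blast
  have "\<forall>z\<in>?S. 1 \<le> z" using assms(1) hdist_pos by blast
  then show ?thesis unfolding min_dist_def using Min_ge_iff[OF fin ne] by blast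
qed

lemma lin_facts:
  assumes "Vector_Spaces.linear s1 svec f"
  shows "f 0 = 0" "\<And>x y. f (x - y) = f x - f y"
proof -
  have add: "\<And>x y. f (x + y) = f x + f y" using assms by (simp add: Vector_Spaces.linear_iff)
  show "f 0 = 0" using add[of 0 0] by simp
  show "\<And>x y. f (x - y) = f x - f y" using add by (metis diff_add_cancel eq_diff_eq)
qed

lemma card_B_ge:
  fixes B :: "(nat \<Rightarrow> 'b::{finite,field}) set"
  assumes "linear_code n2 k2 d2 B" "k2 \<ge> 1"
  shows "card (UNIV::'b set) ^ k2 \<le> card B" "finite B"
proof -
  have Bw: "B \<subseteq> words n2" and sub: "VS.subspace B" and dim: "VS.dim B = k2"
    using assms unfolding linear_code_def by auto
  show finB: "finite B" using Bw card_supp_set[of "{..<n2}"] words_supp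
    by (metis finite_lessThan finite_subset)
  obtain Bs where Bs: "Bs \<subseteq> B" "VS.independent Bs" "B \<subseteq> VS.span Bs" "card Bs = VS.dim B"
    using VS.basis_exists by blast
  have finBs: "finite Bs" using Bs dim assms(2) by (metis card_ge_0_finite less_le_trans zero_less_one)
  define f where "f u = (\<Sum>v\<in>Bs. svec (u v) v)" for u :: "(nat \<Rightarrow> 'b) \<Rightarrow> 'b"
  have img: "f ` PiE Bs (\<lambda>_. UNIV) \<subseteq> B"
    unfolding f_def using Bs sub by (auto intro!: VS.subspace_sum VS.subspace_scale)
  have inj: "inj_on f (PiE Bs (\<lambda>_. UNIV))"
  proof (rule inj_onI)
    fix u u' assume u: "u \<in> PiE Bs (\<lambda>_. UNIV)" and u': "u' \<in> PiE Bs (\<lambda>_. UNIV)" and e: "f u = f u'"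
    have "(\<Sum>v\<in>Bs. svec (u v - u' v) v) = f u - f u'"
      unfolding f_def by (simp add: VS.scale_left_diff_distrib sum_subtractf)
    then have z: "(\<Sum>v\<in>Bs. svec (u v - u' v) v) = 0" using e by simp
    have "\<forall>v\<in>Bs. u v = u' v"
      using VS.independentD[OF Bs(2) finBs order_refl z] by simp
    then show "u = u'" using u u' by (auto simp: PiE_iff extensional_def fun_eq_iff)
  qed
  have "card (PiE Bs (\<lambda>_. UNIV :: 'b set)) = card (UNIV::'b set) ^ k2"
    using Bs dim finBs by (simp add: card_PiE)
  then show "card (UNIV::'b set) ^ k2 \<le> card B"
    using card_image[OF inj] card_mono[OF finB img] by simp
qed

theorem mainTheorem9:
  fixes A :: "(nat \<Rightarrow> 'a::{finite,field}) set"
    and B :: "(nat \<Rightarrow> 'b::{finite,field}) set"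
    and emb :: "'a \<Rightarrow> 'b"
    and phi :: "'b \<Rightarrow> (nat \<Rightarrow> 'a)"
    and enc :: "(nat \<Rightarrow> 'a) \<Rightarrow> (nat \<Rightarrow> 'a)"
    and n1 k1 d1 n2 k2 d2 :: nat
  assumes inner: "linear_code n1 k1 d1 A" and k1_pos: "k1 \<ge> 1"
    and emb: "field_embedding emb"
    and phi_lin: "Vector_Spaces.linear (\<lambda>c x. emb c * x) svec phi"
    and phi_bij: "bij_betw phi UNIV (words k1)"
    and outer: "linear_code n2 k2 d2 B" and k2_pos: "k2 \<ge> 1"
    and enc_lin: "Vector_Spaces.linear svec svec enc"
    and enc_bij: "bij_betw enc (words k1) A"
  shows "int (min_dist (concat_code n1 n2 enc phi B))
           \<le> int (n1 * n2) - int (k1 * k2) + 1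
              - (\<lceil>real (k1 * k2) / (real n1 - real d1 + 1)\<rceil> - 1) * (int d1 - 1)"
proof -
  have Aw: "A \<subseteq> words n1" and subA: "VS.subspace A" and d1def: "min_dist A = d1"
    using inner unfolding linear_code_def by auto
  have Bw: "B \<subseteq> words n2" and subB: "VS.subspace B"
    using outer unfolding linear_code_def by auto
  note enc0 = lin_facts(1)[OF enc_lin] and encdiff = lin_facts(2)[OF enc_lin]
  note phi0 = lin_facts(1)[OF phi_lin] and phidiff = lin_facts(2)[OF phi_lin]
  have encA: "\<And>w. w \<in> words k1 \<Longrightarrow> enc w \<in> A" using enc_bij bij_betwE by blast
  have phiw: "\<And>x. phi x \<in> words k1" using phi_bij bij_betwE by blast
  have phiinj: "inj phi" using phi_bij bij_betw_imp_inj_on by blast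
  have encinj: "inj_on enc (words k1)" using enc_bij bij_betw_imp_inj_on by blast
  have w0: "(0::nat\<Rightarrow>'a) \<in> words k1" by (simp add: words_def)
  define e0 where "e0 = (\<lambda>i::nat. if i = 0 then (1::'a) else 0)"
  have e0w: "e0 \<in> words k1" using k1_pos by (auto simp: words_def e0_def)
  have e0ne: "e0 \<noteq> 0" by (auto simp: e0_def fun_eq_iff)
  have encne: "enc e0 \<noteq> enc 0" using encinj e0w w0 e0ne by (meson inj_on_eq_iff)
  have d1ge: "d1 \<ge> 1" using min_dist_ge1[OF Aw encA[OF e0w] encA[OF w0] encne] d1def by simp
  have d1le: "d1 \<le> n1"
    using min_dist_le[OF Aw encA[OF e0w] encA[OF w0] encne] hdist_le[of "enc e0" n1 "enc 0"]
      Aw encA[OF e0w] encA[OF w0] d1def by (meson le_trans subsetD)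
  define s where "s = n1 + 1 - d1"
  have s1: "s \<ge> 1" and sn1: "s \<le> n1" and n1s: "n1 = s + d1 - 1"
    using d1ge d1le unfolding s_def by auto
  have A0: "0 \<in> A" using VS.subspace_0[OF subA] .
  have blk: "a = 0" if aA: "a \<in> A" and az: "\<forall>i<s. a i = 0" for a
  proof (rule ccontr)
    assume ne: "a \<noteq> 0"
    have "min_dist A \<le> hdist a 0" using min_dist_le[OF Aw aA A0 ne] .
    moreover have "{i. a i \<noteq> 0} \<subseteq> {s..<n1}"
    proof
      fix i assume "i \<in> {i. a i \<noteq> 0}"
      then have "a i \<noteq> 0" by simp
      moreover have "\<forall>i\<ge>n1. a i = 0" using aA Aw by (auto simp: words_def)
      ultimately show "i \<in> {s..<n1}" using az by (metis atLeastLessThan_iff not_le)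
    qed
    then have "hdist a 0 \<le> n1 - s" unfolding hdist_def
      by (metis (no_types, lifting) card_atLeastLessThan card_mono finite_atLeastLessThan zero_fun_def Collect_cong)
    ultimately show False using d1def d1ge n1s by linarith
  qed
  define Q where "Q = card (UNIV::'a set)"
  have Q2: "Q \<ge> 2"
  proof -
    have "card {0::'a, 1} = 2" by simp
    then show ?thesis unfolding Q_def by (metis card_mono finite subset_UNIV)
  qed
  have cardw: "\<And>m. card (words m :: (nat\<Rightarrow>'a) set) = Q ^ m"
    using card_supp_set words_supp Q_def by (metis card_lessThan finite_lessThan)
  have cardA: "card A = Q ^ k1" using bij_betw_same_card[OF enc_bij] cardw by simp
  have k1s: "k1 \<le> s"
  proof -
    define rs where "rs w = (\<lambda>i. if i \<in> {..<s} then w i else (0::'a))" for w :: "nat \<Rightarrow> 'a"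
    have inj: "inj_on rs A"
    proof (rule inj_onI)
      fix a a' assume a: "a \<in> A" and a': "a' \<in> A" and e: "rs a = rs a'"
      have "a - a' \<in> A" using VS.subspace_diff[OF subA a a'] .
      moreover have "\<forall>i<s. (a - a') i = 0" using e unfolding rs_def by (auto simp: fun_eq_iff) (metis lessThan_iff)
      ultimately have "a - a' = 0" by (rule blk)
      then show "a = a'" by simp
    qed
    have "rs ` A \<subseteq> supp_set {..<s}" by (auto simp: rs_def supp_set_def)
    then have "card A \<le> Q ^ s" using card_supp_set[of "{..<s}"] card_image[OF inj] Q_def
      by (metis card_lessThan card_mono finite_lessThan)
    then have "Q ^ k1 \<le> Q ^ s" using cardA by simp
    then show ?thesis using Q2 by (metis power_le_imp_le_exp Suc_1 Suc_le_lessD)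
  qed
  have cardb: "card (UNIV::'b set) = Q ^ k1"
    using bij_betw_same_card[OF phi_bij] cardw by simp
  have Bge: "Q ^ (k1*k2) \<le> card B" and finB: "finite B"
    using card_B_ge[OF outer k2_pos] cardb by (auto simp: power_mult)
  have k2n2: "k2 \<le> n2"
  proof -
    have "card B \<le> card (words n2 :: (nat \<Rightarrow> 'b) set)"
      using Bw card_supp_set[of "{..<n2}"] words_supp by (metis card_mono finite_lessThan)
    also have "\<dots> = card (UNIV::'b set) ^ n2" unfolding words_supp using card_supp_set[where 'a='b, of "{..<n2}"] by simp
    finally have "card (UNIV::'b set) ^ k2 \<le> card (UNIV::'b set) ^ n2"
      using card_B_ge[OF outer k2_pos] by linarith
    moreover have "card (UNIV::'b set) \<ge> 2"
    proof -
      have "card {0::'b, 1} = 2" by simp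
      then show ?thesis by (metis card_mono finite subset_UNIV)
    qed
    ultimately show ?thesis by (metis power_le_imp_le_exp Suc_1 Suc_le_lessD)
  qed
  define k where "k = k1 * k2"
  have k1': "k \<ge> 1" using k1_pos k2_pos unfolding k_def by simp
  define x where "x = real k / real s"
  have xpos: "x > 0" using k1' s1 unfolding x_def by simp
  define M where "M = \<lceil>x\<rceil>"
  have Mge: "x \<le> of_int M" unfolding M_def by simp
  have Mlt: "of_int M - 1 < x" unfolding M_def by (metis le_ceiling_iff order_refl of_int_1 of_int_diff)
  have M1: "M \<ge> 1" using Mge xpos by (metis int_one_le_iff_zero_less of_int_0_less_iff order_less_le_trans)
  define p where "p = nat (M - 1)"
  have pM: "int p = M - 1" using M1 unfolding p_def by simp
  have rp: "real p = of_int M - 1" using pM by (metis of_int_of_nat_eq of_int_diff of_int_1)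
  have ps_lt: "p * s < k"
  proof -
    have "real p < real k / real s" using rp Mlt x_def by simp
    then have "real p * real s < real k" using s1 by (simp add: pos_less_divide_eq)
    then show ?thesis by (metis of_nat_less_iff of_nat_mult)
  qed
  have ps_ge: "k \<le> (p + 1) * s"
  proof -
    have "real k / real s \<le> real p + 1" using rp Mge x_def by simp
    then have "real k \<le> (real p + 1) * real s" using s1 by (simp add: pos_divide_le_eq)
    then show ?thesis by (metis of_nat_le_iff of_nat_mult of_nat_Suc Suc_eq_plus1 add.commute)
  qed
  define r where "r = k - 1 - p * s"
  have r_eq: "r + p * s + 1 = k" using ps_lt unfolding r_def by simp
  have r_lt: "r < s" using r_eq ps_ge by (simp add: algebra_simps)
  have p_k2: "p < k2"
  proof -
    have "p * s < s * k2" using ps_lt k1s unfolding k_def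
      by (metis mult.commute mult_le_mono1 order_less_le_trans)
    then show ?thesis by (simp add: mult.commute)
  qed
  have p_n2: "p + 1 \<le> n2" using p_k2 k2n2 by simp
  define T where "T = (\<lambda>(j,i). j*n1+i) ` ({..<p} \<times> {..<s}) \<union> (\<lambda>i. p*n1+i) ` {..<r}"
  have finT: "finite T" unfolding T_def by simp
  have cardT: "card T \<le> k - 1"
  proof -
    have "card T \<le> card ((\<lambda>(j,i). j*n1+i) ` ({..<p} \<times> {..<s})) + card ((\<lambda>i. p*n1+i) ` {..<r})"
      unfolding T_def by (rule card_Un_le)
    also have "\<dots> \<le> card ({..<p} \<times> {..<s}) + card {..<r}"
      by (intro add_mono card_image_le) auto
    also have "\<dots> = p * s + r" by (simp add: card_cartesian_product)
    finally show ?thesis using r_eq by simp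
  qed
  define cc where "cc = (\<lambda>b::nat\<Rightarrow>'b. \<lambda>t. if t < n1*n2 then enc (phi (b (t div n1))) (t mod n1) else (0::'a))"
  have Cdef: "concat_code n1 n2 enc phi B = cc ` B" unfolding concat_code_def cc_def by simp
  define g where "g b = (\<lambda>t. if t \<in> T then cc b t else 0)" for b
  have gimg: "g ` B \<subseteq> supp_set T" by (auto simp: g_def supp_set_def)
  have "card (supp_set T :: (nat \<Rightarrow> 'a) set) < card B"
  proof -
    have "card (supp_set T :: (nat \<Rightarrow> 'a) set) = Q ^ card T" using card_supp_set[where 'a='a, OF finT] Q_def by simp
    also have "\<dots> \<le> Q ^ (k - 1)" using cardT Q2 by (intro power_increasing) auto
    also have "\<dots> < Q ^ k" using Q2 k1' by (intro power_strict_increasing) auto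
    also have "\<dots> \<le> card B" using Bge k_def by simp
    finally show ?thesis .
  qed
  then obtain b1 b2 where b12: "b1 \<in> B" "b2 \<in> B" "b1 \<noteq> b2" "g b1 = g b2"
    using pigeon[OF finB gimg conjunct1[OF card_supp_set[where 'a='a, OF finT]]] by blast
  define b where "b = b1 - b2"
  have bB: "b \<in> B" unfolding b_def using VS.subspace_diff[OF subB b12(1,2)] .
  have bne: "b \<noteq> 0" using b12 unfolding b_def by simp
  have ccb: "cc b t = cc b1 t - cc b2 t" for t
    unfolding cc_def b_def by (simp add: phidiff encdiff)
  have vanT: "cc b t = 0" if "t \<in> T" for t
    using fun_cong[OF b12(4), of t] that unfolding g_def ccb by simp
  have ccblk: "cc b (j*n1+i) = enc (phi (b j)) i" if "j < n2" "i < n1" for j i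
  proof -
    have "j*n1+i < n1*n2"
    proof -
      have "j*n1+i < (j+1)*n1" using that by simp
      also have "\<dots> \<le> n2*n1" using that by (intro mult_le_mono1) simp
      finally show ?thesis by (simp add: mult.commute)
    qed
    then show ?thesis unfolding cc_def using that by simp
  qed
  have blocks0: "enc (phi (b j)) = 0" if "j < p" for j
  proof (rule blk)
    show "enc (phi (b j)) \<in> A" using encA phiw by blast
    show "\<forall>i<s. enc (phi (b j)) i = 0"
    proof (intro allI impI)
      fix i assume "i < s"
      then have "j*n1+i \<in> T" unfolding T_def using that by auto
      then have "cc b (j*n1+i) = 0" by (rule vanT)
      then show "enc (phi (b j)) i = 0" using ccblk[of j i] that p_n2 \<open>i < s\<close> sn1 by simp
    qed
  qed
  have vanZ: "cc b t = 0" if "t < p*n1 + r" for t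
  proof (cases "t < p*n1")
    case True
    define j where "j = t div n1"
    have n1pos: "n1 > 0" using s1 sn1 by simp
    have jp: "j < p" using True n1pos unfolding j_def by (simp add: div_less_iff_less_mult)
    have tj: "t = j*n1 + t mod n1" unfolding j_def by simp
    have "cc b t = enc (phi (b j)) (t mod n1)" using ccblk[of j "t mod n1"] jp p_n2 n1pos tj by simp
    then show ?thesis using blocks0[OF jp] by simp
  next
    case False
    have e: "t = p*n1 + (t - p*n1)" and l: "t - p*n1 \<in> {..<r}" using False that by auto
    have "t \<in> (\<lambda>i. p*n1+i) ` {..<r}" by (rule image_eqI[where f="\<lambda>i. p*n1+i", OF e l])
    then have "t \<in> T" unfolding T_def by blast
    then show ?thesis by (rule vanT)
  qed
  have cc0: "cc 0 = 0" unfolding cc_def by (simp add: phi0 enc0 fun_eq_iff)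
  have B0: "0 \<in> B" using VS.subspace_0[OF subB] .
  have ccne: "cc b \<noteq> 0"
  proof -
    obtain j where bj: "b j \<noteq> 0" using bne by (auto simp: fun_eq_iff)
    have "\<forall>i\<ge>n2. b i = 0" using bB Bw by (auto simp: words_def)
    then have jn2: "j < n2" using bj by (meson not_le)
    have "phi (b j) \<noteq> 0" using phiinj bj phi0 by (metis injD)
    then have "enc (phi (b j)) \<noteq> 0" using encinj phiw w0 enc0 by (metis inj_on_eq_iff)
    then obtain i where ei: "enc (phi (b j)) i \<noteq> 0" by (auto simp: fun_eq_iff)
    have "enc (phi (b j)) \<in> words n1" using encA phiw Aw by blast
    then have "\<forall>i'\<ge>n1. enc (phi (b j)) i' = 0" by (simp add: words_def)
    then have "i < n1" using ei by (meson not_le)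
    then have "cc b (j*n1+i) \<noteq> 0" using ccblk[OF jn2] ei by simp
    then show ?thesis by auto
  qed
  have Cw: "cc ` B \<subseteq> words (n1*n2)" by (auto simp: cc_def words_def)
  have "min_dist (cc ` B) \<le> hdist (cc b) (cc 0)"
    by (rule min_dist_le[OF Cw]) (use bB B0 ccne cc0 in auto)
  also have "\<dots> = card {t. cc b t \<noteq> 0}" unfolding hdist_def cc0 by simp
  also have "\<dots> \<le> card {p*n1+r..<n1*n2}"
  proof (rule card_mono)
    show "{t. cc b t \<noteq> 0} \<subseteq> {p*n1+r..<n1*n2}"
    proof
      fix t assume "t \<in> {t. cc b t \<noteq> 0}"
      then have "cc b t \<noteq> 0" by simp
      have "t < n1*n2"
      proof (rule ccontr)
        assume "\<not> t < n1*n2"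
        then have "cc b t = 0" unfolding cc_def by simp
        then show False using \<open>cc b t \<noteq> 0\<close> by simp
      qed
      moreover have "p*n1+r \<le> t"
      proof (rule ccontr)
        assume "\<not> p*n1+r \<le> t"
        then have "cc b t = 0" using vanZ by simp
        then show False using \<open>cc b t \<noteq> 0\<close> by simp
      qed
      ultimately show "t \<in> {p*n1+r..<n1*n2}" by simp
    qed
  qed simp
  also have "\<dots> = n1*n2 - (p*n1+r)" by simp
  finally have wt: "min_dist (cc ` B) \<le> n1*n2 - (p*n1+r)" .
  have fit: "p*n1 + r \<le> n1*n2"
  proof -
    have "p*n1 + r \<le> (p+1)*n1" using r_lt sn1 by simp
    also have "\<dots> \<le> n2*n1" using p_n2 by (intro mult_le_mono1)
    finally show ?thesis by (simp add: mult.commute)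
  qed
  have den: "real n1 - real d1 + 1 = real s" using n1s d1ge by simp
  have Meq: "\<lceil>real (k1 * k2) / (real n1 - real d1 + 1)\<rceil> - 1 = int p"
    using pM unfolding M_def x_def den k_def by simp
  have prod: "int p * int n1 = int p * int s + int p * int d1 - int p"
    using n1s d1ge by (simp add: algebra_simps of_nat_diff)
  have "int (min_dist (cc ` B)) \<le> int (n1*n2) - int p * int n1 - int r"
  proof -
    have "int (n1*n2 - (p*n1+r)) = int (n1*n2) - int (p*n1) - int r" using fit by (simp add: of_nat_diff)
    then show ?thesis using wt by (simp add: of_nat_mult)
  qed
  moreover have "int k = int r + int p * int s + 1" using r_eq by (metis of_nat_add of_nat_mult of_nat_1)
  ultimately have G: "int (min_dist (cc ` B)) \<le> int (n1 * n2) - int (k1 * k2) + 1 - int p * (int d1 - 1)"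
    using prod unfolding k_def[symmetric] by (simp add: algebra_simps)
  show ?thesis unfolding Cdef Meq using G .
qed

end
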